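(* Let $\nu \geq 1$, let $\Psi \neq \emptyset$ be a set, let $n\in\mathbb N$ and let $W_1,\dots,W_n:\Omega \to \ell^\infty(\Psi)$ be arbitrary (not necessarily measurable) maps on a probability space $(\Omega,\Upsilon,P)$. For $1\le i\le j\le n$ and $\psi\in\Psi$ put $S_{i,j}^W(\psi)=\sum_{k=i}^j W_k(\psi)$ and $M_{i,j}^W(\psi)=\max_{k=i,\dots,j}|S_{i,k}^W(\psi)|$. Let $\alpha>1$ and let $g:\mathbb N\to\mathbb R$ be such that the pair $(\alpha,g)$ fulfills condition (S) with some index $Q\in[1,2^{(\alpha-1)/\alpha})$. Suppose that for all $1\le i\le j\le n$, $$\mathrm E^*\Big\{\sup_{\psi\in\Psi}|S_{i,j}^W(\psi)|^\nu\Big\}\le g^{\alpha}(j-i+1).$$ Then there exists a constant $A$ depending only on $\alpha,\nu$ and $Q$ such that for all $1\le i\le j\le n$, $$\mathrm E^*\Big\{\sup_{\psi\in\Psi}|M_{i,j}^W(\psi)|^\nu\Big\}\le A\, g^{\alpha}(j-i+1).$$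
   Context: $\ell^\infty(\Psi)$ is the space of bounded real functions on $\Psi$ with the sup norm. $\mathrm E^*$ denotes outer expectation: for an arbitrary map $Y:\Omega\to\mathbb R$, $\mathrm E^*\{Y\}=\inf\{\mathrm E\{U\}: U\ge Y,\ U:\Omega\to[-\infty,\infty] \text{ measurable},\ \mathrm E\{U\}\text{ exists}\}$. Condition (S): for $\alpha>1$ and $g:\mathbb N\to\mathbb R$, the pair $(\alpha,g)$ fulfills condition (S) with index $Q\in[1,2^{(\alpha-1)/\alpha})$ if (i) $g\ge 0$, (ii) $g$ is nondecreasing, and (iii) for each $1\le i<j$, $g(i)+g(j-i)\le Q\,g(j)$. *)

theory Defs
  imports "HOL-Probability.Probability"
begin

definition ereal_expect :: "'a measure \<Rightarrow> ('a \<Rightarrow> ereal) \<Rightarrow> ereal" where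
  "ereal_expect M U =
     enn2ereal (\<integral>\<^sup>+x. e2ennreal (U x) \<partial>M) - enn2ereal (\<integral>\<^sup>+x. e2ennreal (- U x) \<partial>M)"

definition expect_exists :: "'a measure \<Rightarrow> ('a \<Rightarrow> ereal) \<Rightarrow> bool" where
  "expect_exists M U \<longleftrightarrow>
     \<not> ((\<integral>\<^sup>+x. e2ennreal (U x) \<partial>M) = \<infinity> \<and> (\<integral>\<^sup>+x. e2ennreal (- U x) \<partial>M) = \<infinity>)"

definition outer_exp :: "'a measure \<Rightarrow> ('a \<Rightarrow> ereal) \<Rightarrow> ereal" where
  "outer_exp M Y = Inf {ereal_expect M U | U. U \<in> borel_measurable M \<and>
      (\<forall>x\<in>space M. Y x \<le> U x) \<and> expect_exists M U}"

definition Ssum :: "(nat \<Rightarrow> 'a \<Rightarrow> 'p \<Rightarrow> real) \<Rightarrow> nat \<Rightarrow> nat \<Rightarrow> 'a \<Rightarrow> 'p \<Rightarrow> real" where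
  "Ssum W i j \<omega> \<psi> = (\<Sum>k=i..j. W k \<omega> \<psi>)"

definition Mmax :: "(nat \<Rightarrow> 'a \<Rightarrow> 'p \<Rightarrow> real) \<Rightarrow> nat \<Rightarrow> nat \<Rightarrow> 'a \<Rightarrow> 'p \<Rightarrow> real" where
  "Mmax W i j \<omega> \<psi> = Max ((\<lambda>k. \<bar>Ssum W i k \<omega> \<psi>\<bar>) ` {i..j})"

definition cond_S :: "real \<Rightarrow> (nat \<Rightarrow> real) \<Rightarrow> real \<Rightarrow> bool" where
  "cond_S \<alpha> g Q \<longleftrightarrow> \<alpha> > 1 \<and> 1 \<le> Q \<and> Q < 2 powr ((\<alpha> - 1) / \<alpha>) \<and>
     (\<forall>m\<ge>1. g m \<ge> 0) \<and>
     (\<forall>m m'. 1 \<le> m \<and> m \<le> m' \<longrightarrow> g m \<le> g m') \<and>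
     (\<forall>i j. 1 \<le> i \<and> i < j \<longrightarrow> g i + g (j - i) \<le> Q * g j)"

end

theory Submission imports Defs "HOL-Analysis.Analysis" begin


lemma outer_le_adm:
  assumes "U \<in> borel_measurable M" "\<forall>x\<in>space M. Y x \<le> U x" "expect_exists M U"
  shows "outer_exp M Y \<le> ereal_expect M U"
  unfolding outer_exp_def using assms by (intro Inf_lower) blast

lemma outer_lt_adm:
  assumes "outer_exp M Y < r"
  obtains U where "U \<in> borel_measurable M" "\<forall>x\<in>space M. Y x \<le> U x" "expect_exists M U"
    "ereal_expect M U < r"
  using assms unfolding outer_exp_def Inf_less_iff by blast

lemma expect_enn:
  assumes "V \<in> borel_measurable M"
  shows "ereal_expect M (\<lambda>x. enn2ereal (V x)) = enn2ereal (\<integral>\<^sup>+x. V x \<partial>M)"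
    and "expect_exists M (\<lambda>x. enn2ereal (V x))"
proof -
  have "(\<integral>\<^sup>+x. e2ennreal (- enn2ereal (V x)) \<partial>M) = 0"
    by (subst e2ennreal_neg) auto
  then show "ereal_expect M (\<lambda>x. enn2ereal (V x)) = enn2ereal (\<integral>\<^sup>+x. V x \<partial>M)"
    "expect_exists M (\<lambda>x. enn2ereal (V x))"
    unfolding ereal_expect_def expect_exists_def by (auto simp: zero_ennreal.rep_eq)
qed

lemma nonneg_expect:
  assumes "\<forall>x\<in>space M. 0 \<le> U x"
  shows "ereal_expect M U = enn2ereal (\<integral>\<^sup>+x. e2ennreal (U x) \<partial>M)"
proof -
  have "(\<integral>\<^sup>+x. e2ennreal (- U x) \<partial>M) = (\<integral>\<^sup>+x. 0 \<partial>M)"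
    using assms by (intro nn_integral_cong) (simp add: e2ennreal_neg)
  then show ?thesis unfolding ereal_expect_def by (simp add: zero_ennreal.rep_eq)
qed

lemma outer_zero: "outer_exp M (\<lambda>_. 0) \<le> 0"
proof -
  have "outer_exp M (\<lambda>_. 0) \<le> ereal_expect M (\<lambda>x. enn2ereal ((\<lambda>_. 0) x))"
    using expect_enn[of "\<lambda>_. 0" M] by (intro outer_le_adm) auto
  also have "\<dots> = 0" using expect_enn[of "\<lambda>_. 0" M] by (simp add: zero_ennreal.rep_eq)
  finally show ?thesis .
qed

lemma outer_comb:
  fixes Y1 Y2 Y3 Z :: "'a \<Rightarrow> ereal"
  assumes nn: "\<forall>x\<in>space M. 0 \<le> Y1 x \<and> 0 \<le> Y2 x \<and> 0 \<le> Y3 x"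
    and Z: "\<forall>x\<in>space M. Z x \<le> ereal a * Y1 x + ereal b * (Y2 x + Y3 x)"
    and ab: "0 \<le> a" "0 \<le> b"
    and b1: "outer_exp M Y1 \<le> ereal r1" and b2: "outer_exp M Y2 \<le> ereal r2"
    and b3: "outer_exp M Y3 \<le> ereal r3"
  shows "outer_exp M Z \<le> ereal (a * r1 + b * (r2 + r3))"
proof (rule ereal_le_epsilon2)
  fix d :: real assume d: "0 < d"
  define e where "e = d / (a + 2*b + 1)"
  have e: "0 < e" using d ab by (simp add: e_def)
  have de: "(a + 2*b) * e \<le> d"
  proof -
    have "(a + 2*b) * e \<le> (a + 2*b + 1) * e" using e by simp
    also have "\<dots> = d" using ab by (simp add: e_def)
    finally show ?thesis .
  qed
  have ex: "\<exists>V. V \<in> borel_measurable M \<and> (\<forall>x\<in>space M. Y x \<le> enn2ereal (V x))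
      \<and> enn2ereal (\<integral>\<^sup>+x. V x \<partial>M) < ereal (r + e)"
    if "outer_exp M Y \<le> ereal r" "\<forall>x\<in>space M. 0 \<le> Y x" for Y r
  proof -
    have "ereal r < ereal (r + e)" using e by simp
    then have "outer_exp M Y < ereal (r + e)" using that(1) by (rule order.strict_trans1[rotated])
    then obtain U where U: "U \<in> borel_measurable M" "\<forall>x\<in>space M. Y x \<le> U x"
      "ereal_expect M U < ereal (r + e)" by (rule outer_lt_adm)
    have U0: "\<forall>x\<in>space M. 0 \<le> U x" using U(2) that(2) by (meson order.trans)
    show ?thesis
    proof (intro exI conjI)
      show "(\<lambda>x. e2ennreal (U x)) \<in> borel_measurable M" using U(1) by measurable
      show "\<forall>x\<in>space M. Y x \<le> enn2ereal (e2ennreal (U x))"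
        using U(2) U0 by (simp add: enn2ereal_e2ennreal)
      show "enn2ereal (\<integral>\<^sup>+x. e2ennreal (U x) \<partial>M) < ereal (r + e)"
        using U(3) nonneg_expect[OF U0] by simp
    qed
  qed
  obtain V1 where V1: "V1 \<in> borel_measurable M" "\<forall>x\<in>space M. Y1 x \<le> enn2ereal (V1 x)"
      "enn2ereal (\<integral>\<^sup>+x. V1 x \<partial>M) < ereal (r1 + e)" using ex[OF b1] nn by blast
  obtain V2 where V2: "V2 \<in> borel_measurable M" "\<forall>x\<in>space M. Y2 x \<le> enn2ereal (V2 x)"
      "enn2ereal (\<integral>\<^sup>+x. V2 x \<partial>M) < ereal (r2 + e)" using ex[OF b2] nn by blast
  obtain V3 where V3: "V3 \<in> borel_measurable M" "\<forall>x\<in>space M. Y3 x \<le> enn2ereal (V3 x)"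
      "enn2ereal (\<integral>\<^sup>+x. V3 x \<partial>M) < ereal (r3 + e)" using ex[OF b3] nn by blast
  define V where "V = (\<lambda>x. ennreal a * V1 x + ennreal b * (V2 x + V3 x))"
  have Vm: "V \<in> borel_measurable M" unfolding V_def using V1(1) V2(1) V3(1) by measurable
  have "outer_exp M Z \<le> ereal_expect M (\<lambda>x. enn2ereal (V x))"
  proof (rule outer_le_adm)
    show "(\<lambda>x. enn2ereal (V x)) \<in> borel_measurable M" using Vm by measurable
    show "expect_exists M (\<lambda>x. enn2ereal (V x))" using expect_enn[OF Vm] by simp
    show "\<forall>x\<in>space M. Z x \<le> enn2ereal (V x)"
    proof
      fix x assume x: "x \<in> space M"
      have "Z x \<le> ereal a * Y1 x + ereal b * (Y2 x + Y3 x)" using Z x by blast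
      also have "\<dots> \<le> ereal a * enn2ereal (V1 x) + ereal b * (enn2ereal (V2 x) + enn2ereal (V3 x))"
        using x V1(2) V2(2) V3(2) ab
        by (intro add_mono ereal_mult_left_mono) auto
      also have "\<dots> = enn2ereal (V x)" unfolding V_def using ab
        by (simp add: plus_ennreal.rep_eq times_ennreal.rep_eq)
      finally show "Z x \<le> enn2ereal (V x)" .
    qed
  qed
  also have "\<dots> = enn2ereal (\<integral>\<^sup>+x. V x \<partial>M)" using expect_enn[OF Vm] by simp
  also have "(\<integral>\<^sup>+x. V x \<partial>M) = ennreal a * (\<integral>\<^sup>+x. V1 x \<partial>M) + ennreal b * ((\<integral>\<^sup>+x. V2 x \<partial>M) + (\<integral>\<^sup>+x. V3 x \<partial>M))"
    unfolding V_def using V1(1) V2(1) V3(1)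
    by (simp add: nn_integral_add nn_integral_cmult)
  also have "enn2ereal \<dots> = ereal a * enn2ereal (\<integral>\<^sup>+x. V1 x \<partial>M) + ereal b * (enn2ereal (\<integral>\<^sup>+x. V2 x \<partial>M) + enn2ereal (\<integral>\<^sup>+x. V3 x \<partial>M))"
    using ab by (simp add: plus_ennreal.rep_eq times_ennreal.rep_eq)
  also have "\<dots> \<le> ereal a * ereal (r1 + e) + ereal b * (ereal (r2 + e) + ereal (r3 + e))"
    using V1(3) V2(3) V3(3) ab by (intro add_mono ereal_mult_left_mono) auto
  also have "\<dots> = ereal (a * r1 + b * (r2 + r3) + (a + 2*b) * e)" by (simp add: algebra_simps)
  also have "\<dots> \<le> ereal (a * r1 + b * (r2 + r3)) + ereal d" using de by simp
  finally show "outer_exp M Z \<le> ereal (a * r1 + b * (r2 + r3)) + ereal d" .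
qed


lemma conv_aux: "0 < (t::real) \<Longrightarrow> 0 \<le> x \<Longrightarrow> t * (x / t) powr \<nu> = t powr (1 - \<nu>) * x powr \<nu>"
  by (simp add: powr_divide powr_diff)

lemma conv_ineq:
  fixes x y t \<nu> :: real
  assumes nu: "1 \<le> \<nu>" and t: "0 < t" "t < 1" and xy: "0 \<le> x" "0 \<le> y"
  shows "(x + y) powr \<nu> \<le> t powr (1 - \<nu>) * x powr \<nu> + (1 - t) powr (1 - \<nu>) * y powr \<nu>"
proof -
  have c1: "1 \<le> t powr (1 - \<nu>)" using t nu by (smt (verit, del_insts) powr01_less_one)
  have c2: "1 \<le> (1 - t) powr (1 - \<nu>)" using t nu by (smt (verit, del_insts) powr01_less_one)
  consider "x = 0" | "y = 0" | "0 < x" "0 < y" using xy by linarith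
  then show ?thesis
  proof cases
    case 1
    have "y powr \<nu> \<le> (1 - t) powr (1 - \<nu>) * y powr \<nu>"
      using c2 by (simp add: mult_le_cancel_right1)
    then show ?thesis using 1 by simp
  next
    case 2
    have "x powr \<nu> \<le> t powr (1 - \<nu>) * x powr \<nu>"
      using c1 by (simp add: mult_le_cancel_right1)
    then show ?thesis using 2 by simp
  next
    case 3
    have "(\<lambda>z. z powr \<nu>) ((1 - (1 - t)) *\<^sub>R (x / t) + (1 - t) *\<^sub>R (y / (1 - t)))
       \<le> (1 - (1 - t)) * (\<lambda>z. z powr \<nu>) (x / t) + (1 - t) * (\<lambda>z. z powr \<nu>) (y / (1 - t))"
      using 3 t by (intro convex_onD[OF powr_convex[OF nu]]) auto
    moreover have "(1 - (1 - t)) *\<^sub>R (x / t) + (1 - t) *\<^sub>R (y / (1 - t)) = x + y"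
      using t by simp
    moreover have "(1 - t) * (y / (1 - t)) powr \<nu> = (1 - t) powr (1 - \<nu>) * y powr \<nu>"
      using t xy by (intro conv_aux) auto
    ultimately show ?thesis using conv_aux[OF t(1) xy(1)] by simp
  qed
qed

lemma Mmax_ge: "k \<in> {i..j} \<Longrightarrow> \<bar>Ssum W i k \<omega> \<psi>\<bar> \<le> Mmax W i j \<omega> \<psi>"
  unfolding Mmax_def by (rule Max_ge) auto

lemma Mmax_nonneg: "i \<le> j \<Longrightarrow> 0 \<le> Mmax W i j \<omega> \<psi>"
  using Mmax_ge[of i i j W \<omega> \<psi>] by auto

lemma Mmax_single: "Mmax W i i \<omega> \<psi> = \<bar>Ssum W i i \<omega> \<psi>\<bar>"
  unfolding Mmax_def by simp

lemma Ssum_split: "i \<le> m \<Longrightarrow> m < k \<Longrightarrow> Ssum W i k \<omega> \<psi> = Ssum W i m \<omega> \<psi> + Ssum W (m+1) k \<omega> \<psi>"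
  unfolding Ssum_def using sum.ub_add_nat[of i m "\<lambda>l. W l \<omega> \<psi>" "k - m"] by simp

lemma Mmax_split:
  assumes "i \<le> m" "m < j"
  shows "Mmax W i j \<omega> \<psi> \<le> \<bar>Ssum W i m \<omega> \<psi>\<bar>
     + max (if m = i then 0 else Mmax W i (m-1) \<omega> \<psi>) (Mmax W (m+1) j \<omega> \<psi>)"
  unfolding Mmax_def[of W i j]
proof (rule Max.boundedI)
  show "finite ((\<lambda>k. \<bar>Ssum W i k \<omega> \<psi>\<bar>) ` {i..j})" by simp
  show "(\<lambda>k. \<bar>Ssum W i k \<omega> \<psi>\<bar>) ` {i..j} \<noteq> {}" using assms by simp
  have q: "0 \<le> Mmax W (m+1) j \<omega> \<psi>" using assms by (intro Mmax_nonneg) simp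
  fix z assume "z \<in> (\<lambda>k. \<bar>Ssum W i k \<omega> \<psi>\<bar>) ` {i..j}"
  then obtain k where k: "k \<in> {i..j}" "z = \<bar>Ssum W i k \<omega> \<psi>\<bar>" by blast
  consider "k < m" | "k = m" | "m < k" by linarith
  then show "z \<le> \<bar>Ssum W i m \<omega> \<psi>\<bar>
     + max (if m = i then 0 else Mmax W i (m-1) \<omega> \<psi>) (Mmax W (m+1) j \<omega> \<psi>)"
  proof cases
    case 1
    then have "m \<noteq> i" using k by auto
    moreover have "z \<le> Mmax W i (m-1) \<omega> \<psi>" using k 1 Mmax_ge[of k i "m-1" W \<omega> \<psi>] by auto
    ultimately show ?thesis by (smt (verit) abs_ge_zero)
  next
    case 2
    then show ?thesis using k q by (simp add: max_def)
  next
    case 3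
    have "z \<le> \<bar>Ssum W i m \<omega> \<psi>\<bar> + \<bar>Ssum W (m+1) k \<omega> \<psi>\<bar>"
      using k Ssum_split[OF assms(1) 3, of W \<omega> \<psi>] by simp
    also have "\<bar>Ssum W (m+1) k \<omega> \<psi>\<bar> \<le> Mmax W (m+1) j \<omega> \<psi>"
      using k 3 by (intro Mmax_ge) auto
    finally show ?thesis by (simp add: max_def)
  qed
qed


lemma sup_nn: "\<Psi> \<noteq> {} \<Longrightarrow> 0 \<le> (SUP \<psi>\<in>\<Psi>. ereal (f \<psi> powr \<nu>))"
  by (metis SUP_upper2 ex_in_conv ereal_less_eq(5) powr_ge_zero)

lemma main_ind:
  fixes \<alpha> \<nu> Q A C1 C2 :: real and g :: "nat \<Rightarrow> real"
  assumes nu: "1 \<le> \<nu>" and Psi: "\<Psi> \<noteq> {}" and S: "cond_S \<alpha> g Q"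
   and hyp: "\<forall>i j. 1 \<le> i \<and> i \<le> j \<and> j \<le> n \<longrightarrow>
       outer_exp M (\<lambda>\<omega>. SUP \<psi>\<in>\<Psi>. ereal (\<bar>Ssum W i j \<omega> \<psi>\<bar> powr \<nu>))
         \<le> ereal (g (j - i + 1) powr \<alpha>)"
   and C: "0 \<le> C1" "0 \<le> C2" "1 \<le> A" "C1 + C2 * (2 * (Q/2) powr \<alpha>) * A \<le> A"
   and conv: "\<And>x y. 0 \<le> x \<Longrightarrow> 0 \<le> y \<Longrightarrow> (x+y) powr \<nu> \<le> C1 * x powr \<nu> + C2 * y powr \<nu>"
  shows "1 \<le> i \<Longrightarrow> i \<le> j \<Longrightarrow> j \<le> n \<Longrightarrow>
       outer_exp M (\<lambda>\<omega>. SUP \<psi>\<in>\<Psi>. ereal (\<bar>Mmax W i j \<omega> \<psi>\<bar> powr \<nu>))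
         \<le> ereal (A * g (j - i + 1) powr \<alpha>)"
proof (induction "j - i + 1" arbitrary: i j rule: less_induct)
  case less
  have gnn: "\<And>m. 1 \<le> m \<Longrightarrow> 0 \<le> g m" and gmono: "\<And>m m'. 1 \<le> m \<Longrightarrow> m \<le> m' \<Longrightarrow> g m \<le> g m'"
    and gsub: "\<And>i j. 1 \<le> i \<Longrightarrow> i < j \<Longrightarrow> g i + g (j - i) \<le> Q * g j"
    and Q1: "1 \<le> Q"
    using S unfolding cond_S_def by auto
  define N where "N = j - i + 1"
  define G where "G = g N powr \<alpha>"
  have G0: "0 \<le> G" unfolding G_def by simp
  show ?case
  proof (cases "i = j")
    case True
    have "outer_exp M (\<lambda>\<omega>. SUP \<psi>\<in>\<Psi>. ereal (\<bar>Mmax W i j \<omega> \<psi>\<bar> powr \<nu>))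
        = outer_exp M (\<lambda>\<omega>. SUP \<psi>\<in>\<Psi>. ereal (\<bar>Ssum W i j \<omega> \<psi>\<bar> powr \<nu>))"
      using True by (simp add: Mmax_single)
    also have "\<dots> \<le> ereal (g (j - i + 1) powr \<alpha>)" using hyp less.prems by blast
    also have "\<dots> \<le> ereal (A * g (j - i + 1) powr \<alpha>)"
      using C(3) by (simp add: mult_le_cancel_right1)
    finally show ?thesis .
  next
    case False
    define a where "a = (N - 1) div 2"
    define m where "m = i + a"
    define b where "b = j - m"
    have ij: "i < j" using False less.prems by simp
    have facts: "a < N" "i \<le> m" "m < j" "1 \<le> b" "2 * b \<le> N" "a \<le> b" "b < N"
      "(m = i) = (a = 0)" "m - i + 1 \<le> N" "m \<noteq> i \<longrightarrow> m - 1 - i + 1 = a" "j - (m+1) + 1 = b"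
      using ij unfolding N_def a_def m_def b_def by auto
    define K where "K = (Q/2) powr \<alpha>"
    have K0: "0 \<le> K" unfolding K_def by simp
    have gb: "g b powr \<alpha> \<le> K * G"
    proof -
      have "g b + g (2*b - b) \<le> Q * g (2*b)" using facts by (intro gsub) auto
      moreover have "g (2*b) \<le> g N" using facts by (intro gmono) auto
      ultimately have "2 * g b \<le> Q * g N" using Q1 by (smt (verit) mult_left_mono mult_2 diff_add_inverse2 mult_2)
      then have "g b \<le> (Q/2) * g N" by simp
      then have "g b powr \<alpha> \<le> ((Q/2) * g N) powr \<alpha>"
        using gnn facts S unfolding cond_S_def by (intro powr_mono2) auto
      also have "\<dots> = K * G" unfolding K_def G_def using Q1 gnn[of N] facts
        by (subst powr_mult) auto
      finally show ?thesis .
    qed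
    define r2 where "r2 = (if m = i then 0 else A * g a powr \<alpha>)"
    have r2: "r2 \<le> A * K * G"
    proof (cases "m = i")
      case True then show ?thesis using C(3) K0 G0 by (simp add: r2_def)
    next
      case False
      then have "g a \<le> g b" using facts by (intro gmono) auto
      then have "g a powr \<alpha> \<le> g b powr \<alpha>" using gnn facts False S unfolding cond_S_def
        by (intro powr_mono2) auto
      then have "g a powr \<alpha> \<le> K * G" using gb by linarith
      then show ?thesis using False C(3) by (simp add: r2_def mult.assoc)
    qed
    have r3: "A * g b powr \<alpha> \<le> A * K * G" using gb C(3) by (simp add: mult.assoc)
    define Y1 where "Y1 = (\<lambda>\<omega>. SUP \<psi>\<in>\<Psi>. ereal (\<bar>Ssum W i m \<omega> \<psi>\<bar> powr \<nu>))"
    define Y2 where "Y2 = (if m = i then (\<lambda>_. 0) else (\<lambda>\<omega>. SUP \<psi>\<in>\<Psi>. ereal (\<bar>Mmax W i (m-1) \<omega> \<psi>\<bar> powr \<nu>)))"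
    define Y3 where "Y3 = (\<lambda>\<omega>. SUP \<psi>\<in>\<Psi>. ereal (\<bar>Mmax W (m+1) j \<omega> \<psi>\<bar> powr \<nu>))"
    have b1: "outer_exp M Y1 \<le> ereal G"
    proof -
      have "outer_exp M Y1 \<le> ereal (g (m - i + 1) powr \<alpha>)" unfolding Y1_def
        using hyp less.prems facts by auto
      also have "g (m - i + 1) \<le> g N" using facts by (intro gmono) auto
      then have "g (m - i + 1) powr \<alpha> \<le> G" unfolding G_def using gnn S unfolding cond_S_def
        by (intro powr_mono2) auto
      finally show ?thesis by simp
    qed
    have b2: "outer_exp M Y2 \<le> ereal r2"
    proof (cases "m = i")
      case True then show ?thesis unfolding Y2_def r2_def using outer_zero[of M] by (simp add: zero_ereal_def)
    next
      case False
      have "outer_exp M Y2 \<le> ereal (A * g ((m-1) - i + 1) powr \<alpha>)" unfolding Y2_def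
        using False less.hyps[of "m-1" i] less.prems facts unfolding N_def by auto
      then show ?thesis using False facts by (simp add: r2_def)
    qed
    have b3: "outer_exp M Y3 \<le> ereal (A * g b powr \<alpha>)"
      unfolding Y3_def using less.hyps[of j "m+1"] less.prems facts unfolding N_def by auto
    have nn: "\<forall>x\<in>space M. 0 \<le> Y1 x \<and> 0 \<le> Y2 x \<and> 0 \<le> Y3 x"
      unfolding Y1_def Y2_def Y3_def using sup_nn[OF Psi] by auto
    have Z: "\<forall>\<omega>\<in>space M. (SUP \<psi>\<in>\<Psi>. ereal (\<bar>Mmax W i j \<omega> \<psi>\<bar> powr \<nu>))
        \<le> ereal C1 * Y1 \<omega> + ereal C2 * (Y2 \<omega> + Y3 \<omega>)"
    proof (intro ballI SUP_least)
      fix \<omega> \<psi> assume \<psi>: "\<psi> \<in> \<Psi>"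
      define x where "x = \<bar>Ssum W i m \<omega> \<psi>\<bar>"
      define p where "p = (if m = i then 0 else Mmax W i (m-1) \<omega> \<psi>)"
      define q where "q = Mmax W (m+1) j \<omega> \<psi>"
      have x0: "0 \<le> x" unfolding x_def by simp
      have p0: "0 \<le> p" unfolding p_def using facts Mmax_nonneg[of i "m-1" W \<omega> \<psi>] by (cases "m = i") auto
      have q0: "0 \<le> q" unfolding q_def using facts Mmax_nonneg[of "m+1" j] by auto
      have M0: "0 \<le> Mmax W i j \<omega> \<psi>" using ij Mmax_nonneg[of i j] by auto
      have "\<bar>Mmax W i j \<omega> \<psi>\<bar> powr \<nu> = Mmax W i j \<omega> \<psi> powr \<nu>" using M0 by simp
      also have "\<dots> \<le> (x + max p q) powr \<nu>"
        using Mmax_split[OF facts(2,3), of W \<omega> \<psi>] M0 nu unfolding x_def p_def q_def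
        by (intro powr_mono2) auto
      also have "\<dots> \<le> C1 * x powr \<nu> + C2 * (max p q) powr \<nu>"
        using x0 p0 q0 by (intro conv) auto
      also have "(max p q) powr \<nu> \<le> p powr \<nu> + q powr \<nu>"
        by (simp add: max_def)
      then have "C2 * (max p q) powr \<nu> \<le> C2 * (p powr \<nu> + q powr \<nu>)"
        using C(2) by (rule mult_left_mono)
      finally have R: "\<bar>Mmax W i j \<omega> \<psi>\<bar> powr \<nu> \<le> C1 * x powr \<nu> + C2 * (p powr \<nu> + q powr \<nu>)"
        by simp
      have e1: "ereal (x powr \<nu>) \<le> Y1 \<omega>" unfolding Y1_def x_def using \<psi> by (rule SUP_upper2) simp
      have e2: "ereal (p powr \<nu>) \<le> Y2 \<omega>"
      proof (cases "m = i")
        case True then show ?thesis unfolding Y2_def p_def by simp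
      next
        case False
        then have "p = \<bar>Mmax W i (m-1) \<omega> \<psi>\<bar>" using p0 unfolding p_def by simp
        then show ?thesis unfolding Y2_def using False \<psi> by (simp add: SUP_upper2)
      qed
      have e3: "ereal (q powr \<nu>) \<le> Y3 \<omega>" unfolding Y3_def using \<psi> by (rule SUP_upper2) (use q0 in \<open>simp add: q_def\<close>)
      have "ereal (\<bar>Mmax W i j \<omega> \<psi>\<bar> powr \<nu>) \<le> ereal (C1 * x powr \<nu> + C2 * (p powr \<nu> + q powr \<nu>))"
        using R by simp
      also have "\<dots> = ereal C1 * ereal (x powr \<nu>) + ereal C2 * (ereal (p powr \<nu>) + ereal (q powr \<nu>))"
        by simp
      also have "\<dots> \<le> ereal C1 * Y1 \<omega> + ereal C2 * (Y2 \<omega> + Y3 \<omega>)"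
        using e1 e2 e3 C by (intro add_mono ereal_mult_left_mono) auto
      finally show "ereal (\<bar>Mmax W i j \<omega> \<psi>\<bar> powr \<nu>) \<le> ereal C1 * Y1 \<omega> + ereal C2 * (Y2 \<omega> + Y3 \<omega>)" .
    qed
    have "outer_exp M (\<lambda>\<omega>. SUP \<psi>\<in>\<Psi>. ereal (\<bar>Mmax W i j \<omega> \<psi>\<bar> powr \<nu>))
        \<le> ereal (C1 * G + C2 * (r2 + A * g b powr \<alpha>))"
      by (rule outer_comb[OF nn Z C(1,2) b1 b2 b3])
    also have "C1 * G + C2 * (r2 + A * g b powr \<alpha>) \<le> C1 * G + C2 * (2 * (A * K * G))"
      using r2 r3 C(2) by (intro add_left_mono mult_left_mono) auto
    also have "\<dots> = (C1 + C2 * (2 * K) * A) * G" by (simp add: algebra_simps)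
    also have "\<dots> \<le> A * G" using C(4) G0 unfolding K_def by (intro mult_right_mono) auto
    finally show ?thesis unfolding G_def N_def by simp
  qed
qed


lemma c_less:
  fixes \<alpha> Q :: real
  assumes "\<alpha> > 1" "1 \<le> Q" "Q < 2 powr ((\<alpha> - 1) / \<alpha>)"
  shows "2 * (Q/2) powr \<alpha> < 1" "0 < 2 * (Q/2) powr \<alpha>"
proof -
  have e: "2 powr ((\<alpha> - 1) / \<alpha>) / 2 = 2 powr (-1/\<alpha>)"
  proof -
    have "2 powr ((\<alpha> - 1) / \<alpha>) / 2 = 2 powr ((\<alpha> - 1) / \<alpha>) / 2 powr 1" by simp
    also have "\<dots> = 2 powr ((\<alpha> - 1) / \<alpha> - 1)" by (rule powr_diff[symmetric])
    also have "(\<alpha> - 1) / \<alpha> - 1 = -1/\<alpha>" using assms by (simp add: field_simps)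
    finally show ?thesis .
  qed
  have "Q/2 < 2 powr (-1/\<alpha>)" using assms(3) e by simp
  then have "(Q/2) powr \<alpha> < (2 powr (-1/\<alpha>)) powr \<alpha>"
    using assms by (intro powr_less_mono2) auto
  also have "\<dots> = 2 powr (-1)" using assms by (simp add: powr_powr)
  also have "\<dots> = 1/2" by (simp add: powr_minus)
  finally show "2 * (Q/2) powr \<alpha> < 1" by simp
  show "0 < 2 * (Q/2) powr \<alpha>" using assms by simp
qed

lemma C2c:
  fixes c \<nu> :: real
  assumes "0 < c" "1 \<le> \<nu>"
  shows "(c powr (1/\<nu>)) powr (1 - \<nu>) * c = c powr (1/\<nu>)"
proof -
  have "(c powr (1/\<nu>)) powr (1 - \<nu>) * c = c powr ((1/\<nu>) * (1 - \<nu>)) * c powr 1"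
    using assms by (simp add: powr_powr)
  also have "\<dots> = c powr ((1/\<nu>) * (1 - \<nu>) + 1)" by (simp add: powr_add)
  also have "(1/\<nu>) * (1 - \<nu>) + 1 = 1/\<nu>" using assms by (simp add: field_simps)
  finally show ?thesis .
qed

theorem proposition2p1:
  fixes \<alpha> \<nu> Q :: real
  assumes "\<alpha> > 1" and "\<nu> \<ge> 1" and "1 \<le> Q" and "Q < 2 powr ((\<alpha> - 1) / \<alpha>)"
  shows "\<exists>A::real. \<forall>(M::'a measure) (\<Psi>::'p set) (n::nat) (W::nat \<Rightarrow> 'a \<Rightarrow> 'p \<Rightarrow> real)
            (g::nat \<Rightarrow> real).
    prob_space M \<and> \<Psi> \<noteq> {} \<and>
    (\<forall>k\<in>{1..n}. \<forall>\<omega>\<in>space M. bounded (W k \<omega> ` \<Psi>)) \<and>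
    cond_S \<alpha> g Q \<and>
    (\<forall>i j. 1 \<le> i \<and> i \<le> j \<and> j \<le> n \<longrightarrow>
       outer_exp M (\<lambda>\<omega>. SUP \<psi>\<in>\<Psi>. ereal (\<bar>Ssum W i j \<omega> \<psi>\<bar> powr \<nu>))
         \<le> ereal (g (j - i + 1) powr \<alpha>))
    \<longrightarrow>
    (\<forall>i j. 1 \<le> i \<and> i \<le> j \<and> j \<le> n \<longrightarrow>
       outer_exp M (\<lambda>\<omega>. SUP \<psi>\<in>\<Psi>. ereal (\<bar>Mmax W i j \<omega> \<psi>\<bar> powr \<nu>))
         \<le> ereal (A * g (j - i + 1) powr \<alpha>))"
proof -
  define c where "c = 2 * (Q/2) powr \<alpha>"
  have c: "0 < c" "c < 1" using c_less[OF assms(1,3,4)] unfolding c_def by auto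
  define s where "s = c powr (1/\<nu>)"
  have s: "0 < s" "s < 1" unfolding s_def using c assms(2)
    by (auto simp: powr01_less_one)
  define C1 where "C1 = (1 - s) powr (1 - \<nu>)"
  define C2 where "C2 = s powr (1 - \<nu>)"
  have C2c: "C2 * c < 1" unfolding C2_def using C2c[OF c(1) assms(2)] s unfolding s_def by simp
  define A where "A = max 1 (C1 / (1 - C2 * c))"
  have A1: "1 \<le> A" unfolding A_def by simp
  have C0: "0 \<le> C1" "0 \<le> C2" unfolding C1_def C2_def by auto
  have AC: "C1 + C2 * c * A \<le> A"
  proof -
    have "C1 / (1 - C2 * c) \<le> A" unfolding A_def by simp
    then have "C1 \<le> A * (1 - C2 * c)" using C2c by (simp add: divide_le_eq)
    then show ?thesis by (simp add: algebra_simps)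
  qed
  have conv: "\<And>x y. 0 \<le> x \<Longrightarrow> 0 \<le> y \<Longrightarrow> (x+y) powr \<nu> \<le> C1 * x powr \<nu> + C2 * y powr \<nu>"
    unfolding C1_def C2_def using conv_ineq[OF assms(2), of "1 - s"] s by simp
  show ?thesis
  proof (intro exI allI impI)
    fix M :: "'a measure" and \<Psi> :: "'p set" and n W and g :: "nat \<Rightarrow> real" and i j :: nat
    assume H: "prob_space M \<and> \<Psi> \<noteq> {} \<and>
    (\<forall>k\<in>{1..n}. \<forall>\<omega>\<in>space M. bounded (W k \<omega> ` \<Psi>)) \<and>
    cond_S \<alpha> g Q \<and>
    (\<forall>i j. 1 \<le> i \<and> i \<le> j \<and> j \<le> n \<longrightarrow>
       outer_exp M (\<lambda>\<omega>. SUP \<psi>\<in>\<Psi>. ereal (\<bar>Ssum W i j \<omega> \<psi>\<bar> powr \<nu>))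
         \<le> ereal (g (j - i + 1) powr \<alpha>))"
      and ij: "1 \<le> i \<and> i \<le> j \<and> j \<le> n"
    show "outer_exp M (\<lambda>\<omega>. SUP \<psi>\<in>\<Psi>. ereal (\<bar>Mmax W i j \<omega> \<psi>\<bar> powr \<nu>))
         \<le> ereal (A * g (j - i + 1) powr \<alpha>)"
      using main_ind[OF assms(2), of \<Psi> \<alpha> g Q n M W C1 C2 A] H ij C0 A1 AC conv
      unfolding c_def by blast
  qed
qed

end
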